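(* Let $\mathfrak{R}$ be an alternative ring with a nontrivial idempotent $e_1$ and Peirce decomposition $\mathfrak{R}=\mathfrak{R}_{11}\oplus\mathfrak{R}_{12}\oplus\mathfrak{R}_{21}\oplus\mathfrak{R}_{22}$, satisfying: (i) if $a_{11}\in\mathfrak{R}_{11}$, $a_{22}\in\mathfrak{R}_{22}$ and $[a_{11}+a_{22},\mathfrak{R}_{12}]=0$, then $a_{11}+a_{22}\in\mathcal{Z}(\mathfrak{R})$; (ii) if $a_{11}\in\mathfrak{R}_{11}$, $a_{22}\in\mathfrak{R}_{22}$ and $[a_{11}+a_{22},\mathfrak{R}_{21}]=0$, then $a_{11}+a_{22}\in\mathcal{Z}(\mathfrak{R})$. Let $\mathcal{D}$ be a multiplicative Lie-type derivation of $\mathfrak{R}$. Then for any $a_{12}\in\mathfrak{R}_{12}$ and $b_{21}\in\mathfrak{R}_{21}$, $\mathcal{D}(a_{12}+b_{21})=\mathcal{D}(a_{12})+\mathcal{D}(b_{21})$.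
   Context: Rings are not assumed associative or unital. The associator is $(x,y,z)=(xy)z-x(yz)$; $\mathfrak{R}$ is alternative if $(x,x,y)=0=(y,x,x)$ for all $x,y$. $[x,y]=xy-yx$ and $\mathcal{Z}(\mathfrak{R})=\{r: [r,x]=0\ \forall x\in\mathfrak{R}\}$. Define $p_1(x)=x$, $p_n(x_1,\dots,x_n)=[p_{n-1}(x_1,\dots,x_{n-1}),x_n]$. For $n\ge2$, a (not necessarily additive) map $\mathcal{D}\colon\mathfrak{R}\to\mathfrak{R}$ is a multiplicative Lie $n$-derivation if $\mathcal{D}(p_n(x_1,\dots,x_n))=\sum_{i=1}^n p_n(x_1,\dots,\mathcal{D}(x_i),\dots,x_n)$ for all $x_i\in\mathfrak{R}$; a multiplicative Lie-type derivation is a multiplicative Lie $n$-derivation for some $n\ge2$. A nontrivial idempotent is $e_1\ne0$ with $e_1^2=e_1$ which is not a multiplicative identity. With $e_2a:=a-e_1a$, $ae_2:=a-ae_1$, set $\mathfrak{R}_{ij}=e_i\mathfrak{R}e_j$ ($i,j=1,2$), so $\mathfrak{R}=\bigoplus_{i,j}\mathfrak{R}_{ij}$. *)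

theory Defs
  imports Main
begin

definition nonassoc_ring :: "'a::{ab_group_add,times} itself \<Rightarrow> bool" where
  "nonassoc_ring _ \<longleftrightarrow>
     (\<forall>x y z::'a. x * (y + z) = x * y + x * z) \<and>
     (\<forall>x y z::'a. (x + y) * z = x * z + y * z)"

definition associator :: "'a::{ab_group_add,times} \<Rightarrow> 'a \<Rightarrow> 'a \<Rightarrow> 'a" where
  "associator x y z = (x * y) * z - x * (y * z)"

definition alternative_ring :: "'a::{ab_group_add,times} itself \<Rightarrow> bool" where
  "alternative_ring T \<longleftrightarrow> nonassoc_ring T \<and>
     (\<forall>x y::'a. associator x x y = 0 \<and> associator y x x = 0)"

definition commutator :: "'a::{ab_group_add,times} \<Rightarrow> 'a \<Rightarrow> 'a" where
  "commutator x y = x * y - y * x"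

definition center :: "'a::{ab_group_add,times} set" where
  "center = {r. \<forall>x. commutator r x = 0}"

text \<open>p_n(x_1,...,x_n): \<open>lie_poly x [x_2,...,x_n]\<close>, with n = length list + 1.\<close>
definition lie_poly :: "'a::{ab_group_add,times} \<Rightarrow> 'a list \<Rightarrow> 'a" where
  "lie_poly x ys = foldl commutator x ys"

definition mult_lie_n_derivation :: "nat \<Rightarrow> ('a::{ab_group_add,times} \<Rightarrow> 'a) \<Rightarrow> bool" where
  "mult_lie_n_derivation n D \<longleftrightarrow> 2 \<le> n \<and>
     (\<forall>x ys. length ys = n - 1 \<longrightarrow>
        D (lie_poly x ys) =
          lie_poly (D x) ys + (\<Sum>i<length ys. lie_poly x (ys[i := D (ys ! i)])))"

definition mult_lie_type_derivation :: "('a::{ab_group_add,times} \<Rightarrow> 'a) \<Rightarrow> bool" where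
  "mult_lie_type_derivation D \<longleftrightarrow> (\<exists>n\<ge>2. mult_lie_n_derivation n D)"

definition nontrivial_idempotent :: "'a::{ab_group_add,times} \<Rightarrow> bool" where
  "nontrivial_idempotent e \<longleftrightarrow> e \<noteq> 0 \<and> e * e = e \<and> \<not> (\<forall>x. e * x = x \<and> x * e = x)"

text \<open>Left/right multiplication by e_1 and by the formal e_2 = 1 - e_1.\<close>
definition eL :: "'a::{ab_group_add,times} \<Rightarrow> nat \<Rightarrow> 'a \<Rightarrow> 'a" where
  "eL e i a = (if i = 1 then e * a else a - e * a)"

definition eR :: "'a::{ab_group_add,times} \<Rightarrow> nat \<Rightarrow> 'a \<Rightarrow> 'a" where
  "eR e j a = (if j = 1 then a * e else a - a * e)"

text \<open>Peirce component R_ij = e_i R e_j (i, j \<in> {1,2}), read as (e_i a) e_j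
  (equal to e_i (a e_j) in an alternative ring by flexibility).\<close>
definition peirce :: "'a::{ab_group_add,times} \<Rightarrow> nat \<Rightarrow> nat \<Rightarrow> 'a set" where
  "peirce e i j = {eR e j (eL e i a) | a. True}"

end

theory Submission
  imports Defs
begin

lemma alt_dl: "alternative_ring TYPE('a::{ab_group_add,times}) \<Longrightarrow> (x::'a) * (y + z) = x * y + x * z"
  unfolding alternative_ring_def nonassoc_ring_def by blast
lemma alt_dr: "alternative_ring TYPE('a::{ab_group_add,times}) \<Longrightarrow> ((x::'a) + y) * z = x * z + y * z"
  unfolding alternative_ring_def nonassoc_ring_def by blast
lemma alt_l: "alternative_ring TYPE('a::{ab_group_add,times}) \<Longrightarrow> associator (x::'a) x y = 0"
  unfolding alternative_ring_def by blast
lemma alt_r: "alternative_ring TYPE('a::{ab_group_add,times}) \<Longrightarrow> associator (y::'a) x x = 0"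
  unfolding alternative_ring_def by blast

lemma mult_0r: assumes "alternative_ring TYPE('a::{ab_group_add,times})" shows "(x::'a) * 0 = 0"
proof -
  have "x * (0 + 0) = x * 0 + x * 0" by (rule alt_dl[OF assms])
  then show ?thesis by simp
qed
lemma mult_0l: assumes "alternative_ring TYPE('a::{ab_group_add,times})" shows "0 * (x::'a) = 0"
proof -
  have "(0 + 0) * x = 0 * x + 0 * x" by (rule alt_dr[OF assms])
  then show ?thesis by simp
qed
lemma mult_minr: assumes "alternative_ring TYPE('a::{ab_group_add,times})" shows "(x::'a) * (- y) = - (x * y)"
proof -
  have "x * (y + - y) = x * y + x * (-y)" by (rule alt_dl[OF assms])
  then show ?thesis using mult_0r[OF assms, of x] by (simp add: eq_neg_iff_add_eq_0 add.commute)
qed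
lemma mult_minl: assumes "alternative_ring TYPE('a::{ab_group_add,times})" shows "(- x) * (y::'a) = - (x * y)"
proof -
  have "(x + - x) * y = x * y + (-x) * y" by (rule alt_dr[OF assms])
  then show ?thesis using mult_0l[OF assms, of y] by (simp add: eq_neg_iff_add_eq_0 add.commute)
qed

lemma assoc_add1: assumes "alternative_ring TYPE('a::{ab_group_add,times})"
  shows "associator ((x::'a) + y) z w = associator x z w + associator y z w"
  unfolding associator_def using alt_dl[OF assms] alt_dr[OF assms] by (simp add: algebra_simps)
lemma assoc_add2: assumes "alternative_ring TYPE('a::{ab_group_add,times})"
  shows "associator z ((x::'a) + y) w = associator z x w + associator z y w"
  unfolding associator_def using alt_dl[OF assms] alt_dr[OF assms] by (simp add: algebra_simps)
lemma assoc_add3: assumes "alternative_ring TYPE('a::{ab_group_add,times})"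
  shows "associator z w ((x::'a) + y) = associator z w x + associator z w y"
  unfolding associator_def using alt_dl[OF assms] alt_dr[OF assms] by (simp add: algebra_simps)

lemma assoc_skew12: assumes A: "alternative_ring TYPE('a::{ab_group_add,times})"
  shows "associator (x::'a) y z = - associator y x z"
proof -
  have "associator (x + y) (x + y) z = 0" by (rule alt_l[OF A])
  then have "associator x x z + associator x y z + (associator y x z + associator y y z) = 0"
    by (simp add: assoc_add1[OF A] assoc_add2[OF A] add_ac)
  then show ?thesis by (simp add: alt_l[OF A] eq_neg_iff_add_eq_0)
qed
lemma assoc_skew23: assumes A: "alternative_ring TYPE('a::{ab_group_add,times})"
  shows "associator z (x::'a) y = - associator z y x"
proof -
  have "associator z (x + y) (x + y) = 0" by (rule alt_r[OF A])
  then have "associator z x x + associator z x y + (associator z y x + associator z y y) = 0"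
    by (simp add: assoc_add2[OF A] assoc_add3[OF A] add_ac)
  then show ?thesis by (simp add: alt_r[OF A] eq_neg_iff_add_eq_0)
qed
lemma flex: assumes A: "alternative_ring TYPE('a::{ab_group_add,times})"
  shows "associator (x::'a) y x = 0"
  using assoc_skew23[OF A, of x y x] alt_l[OF A, of x y] by simp

lemma assoc_eq: "associator x y z = 0 \<Longrightarrow> (x * y) * z = x * (y * z)"
  unfolding associator_def by simp

lemma peirce12: assumes A: "alternative_ring TYPE('a::{ab_group_add,times})"
  and e: "(e::'a) * e = e" and a: "a \<in> peirce e 1 2"
  shows "e * a = a" "a * e = 0"
proof -
  obtain r where r: "a = e * r - (e * r) * e" using a unfolding peirce_def eL_def eR_def by auto
  have 1: "e * (e * r) = e * r" using assoc_eq[OF alt_l[OF A, of e r]] e by simp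
  have 2: "e * ((e * r) * e) = (e * r) * e" using assoc_eq[OF flex[OF A, of e "e*r"]] 1 by simp
  have 3: "((e * r) * e) * e = (e * r) * e" using assoc_eq[OF alt_r[OF A, of "e*r" e]] e by simp
  have m1: "\<And>x y z. (x::'a) * (y - z) = x * y - x * z"
    by (simp only: diff_conv_add_uminus alt_dl[OF A] mult_minr[OF A])
  have m2: "\<And>x y z. ((x::'a) - y) * z = x * z - y * z"
    by (simp only: diff_conv_add_uminus alt_dr[OF A] mult_minl[OF A])
  show "e * a = a" unfolding r m1 1 2 ..
  show "a * e = 0" unfolding r m2 3 by simp
qed

lemma peirce21: assumes A: "alternative_ring TYPE('a::{ab_group_add,times})"
  and e: "(e::'a) * e = e" and b: "b \<in> peirce e 2 1"
  shows "b * e = b" "e * b = 0"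
proof -
  have m1: "\<And>x y z. (x::'a) * (y - z) = x * y - x * z"
    by (simp only: diff_conv_add_uminus alt_dl[OF A] mult_minr[OF A])
  obtain r where r: "b = (r - e * r) * e" using b unfolding peirce_def eL_def eR_def by auto
  define t where "t = r - e * r"
  have 1: "e * (e * r) = e * r" using assoc_eq[OF alt_l[OF A, of e r]] e by simp
  have et: "e * t = 0" unfolding t_def m1 1 by simp
  show "b * e = b" unfolding r t_def[symmetric] using assoc_eq[OF alt_r[OF A, of t e]] e by simp
  show "e * b = 0" unfolding r t_def[symmetric] using assoc_eq[OF flex[OF A, of e t]] et mult_0l[OF A] by simp
qed

lemma cross_prods: assumes A: "alternative_ring TYPE('a::{ab_group_add,times})"
  and ea: "(e::'a) * a = a" and ae: "a * e = 0" and be: "b * e = b" and eb: "e * b = 0"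
  shows "(a * b) * e = a * b" "e * (a * b) = a * b" "(b * a) * e = 0" "e * (b * a) = 0"
proof -
  have z1: "associator a e b = 0" unfolding associator_def ae eb mult_0l[OF A] mult_0r[OF A] by simp
  have z2: "associator b e a = 0" unfolding associator_def be ea by simp
  have "associator a b e = 0" using assoc_skew23[OF A, of a b e] z1 by simp
  then show "(a * b) * e = a * b" using be unfolding associator_def by simp
  have "associator e a b = 0" using assoc_skew12[OF A, of e a b] z1 by simp
  then show "e * (a * b) = a * b" using ea unfolding associator_def by simp
  have "associator b a e = 0" using assoc_skew23[OF A, of b a e] z2 by simp
  then show "(b * a) * e = 0" using ae mult_0r[OF A] unfolding associator_def by simp
  have "associator e b a = 0" using assoc_skew12[OF A, of e b a] z2 by simp
  then show "e * (b * a) = 0" using eb mult_0l[OF A] unfolding associator_def by simp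
qed

lemma comm_add1: assumes A: "alternative_ring TYPE('a::{ab_group_add,times})"
  shows "commutator ((x::'a) + y) z = commutator x z + commutator y z"
  unfolding commutator_def alt_dl[OF A] alt_dr[OF A] by (simp add: algebra_simps)
lemma comm_add2: assumes A: "alternative_ring TYPE('a::{ab_group_add,times})"
  shows "commutator z ((x::'a) + y) = commutator z x + commutator z y"
  unfolding commutator_def alt_dl[OF A] alt_dr[OF A] by (simp add: algebra_simps)
lemma comm_0: assumes A: "alternative_ring TYPE('a::{ab_group_add,times})"
  shows "commutator 0 (z::'a) = 0" "commutator z (0::'a) = 0"
  unfolding commutator_def mult_0l[OF A] mult_0r[OF A] by simp_all

lemma lp_cons: "lie_poly x (y # ys) = lie_poly (commutator x y) ys"
  unfolding lie_poly_def by simp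
lemma lp_nil: "lie_poly x [] = x"
  unfolding lie_poly_def by simp

lemma lp_add: assumes A: "alternative_ring TYPE('a::{ab_group_add,times})"
  shows "lie_poly ((x::'a) + y) ys = lie_poly x ys + lie_poly y ys"
proof (induction ys arbitrary: x y)
  case Nil then show ?case by (simp add: lp_nil)
next
  case (Cons z ys) then show ?case by (simp add: lp_cons comm_add1[OF A])
qed
lemma lp_0: assumes A: "alternative_ring TYPE('a::{ab_group_add,times})"
  shows "lie_poly (0::'a) ys = 0"
proof (induction ys)
  case Nil then show ?case by (simp add: lp_nil)
next
  case (Cons z ys) then show ?case by (simp add: lp_cons comm_0[OF A])
qed
lemma lp_add2: assumes A: "alternative_ring TYPE('a::{ab_group_add,times})"
  shows "lie_poly x (((y::'a) + z) # ys) = lie_poly x (y # ys) + lie_poly x (z # ys)"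
  by (simp add: lp_cons comm_add2[OF A] lp_add[OF A])

lemma der_eq: "mult_lie_n_derivation n D \<Longrightarrow> length ys = n - 1 \<Longrightarrow>
   D (lie_poly x ys) = lie_poly (D x) ys + (\<Sum>i<length ys. lie_poly x (ys[i := D (ys ! i)]))"
  unfolding mult_lie_n_derivation_def by blast

lemma grp3: "(P::'a::ab_group_add) = A + S \<Longrightarrow> Q = B + S1 \<Longrightarrow> R = C + S2 \<Longrightarrow> S = S1 + S2
  \<Longrightarrow> P - Q - R = A - B - C"
  by (simp add: algebra_simps)

lemma grp3b: "(P::'a::ab_group_add) = A + X + S \<Longrightarrow> Q = B + Y + S1 \<Longrightarrow> R = C + Z + S2 \<Longrightarrow> S = S1 + S2
  \<Longrightarrow> A = B + C \<Longrightarrow> P - Q - R = X - Y - Z"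
  by (simp add: algebra_simps)

lemma der_D0: assumes A: "alternative_ring TYPE('a::{ab_group_add,times})"
  and d: "mult_lie_n_derivation n (D::'a \<Rightarrow> 'a)"
  shows "D 0 = 0"
proof -
  have n: "n \<ge> 2" using d unfolding mult_lie_n_derivation_def by simp
  define ys where "ys = replicate (n - 1) (0::'a)"
  have l: "length ys = n - 1" unfolding ys_def by simp
  define k where "k = n - 2"
  have k: "n - 1 = Suc k" using n unfolding k_def by arith
  have ys: "ys = 0 # replicate k 0" unfolding ys_def k by simp
  have "D (lie_poly 0 ys) = lie_poly (D 0) ys + (\<Sum>i<length ys. lie_poly 0 (ys[i := D (ys ! i)]))"
    by (rule der_eq[OF d l])
  then show ?thesis using ys by (simp add: lp_0[OF A] lp_cons comm_0[OF A])
qed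

lemma der_C0: assumes A: "alternative_ring TYPE('a::{ab_group_add,times})"
  and d: "mult_lie_n_derivation n (D::'a \<Rightarrow> 'a)" and l: "length zs = n - 1"
  shows "D (lie_poly (y1 + y2) zs) - D (lie_poly y1 zs) - D (lie_poly y2 zs)
       = lie_poly (D (y1 + y2)) zs - lie_poly (D y1) zs - lie_poly (D y2) zs"
proof -
  have s: "(\<Sum>i<length zs. lie_poly (y1 + y2) (zs[i := D (zs ! i)])) =
     (\<Sum>i<length zs. lie_poly y1 (zs[i := D (zs ! i)])) + (\<Sum>i<length zs. lie_poly y2 (zs[i := D (zs ! i)]))"
    by (simp add: lp_add[OF A] sum.distrib)
  show ?thesis by (rule grp3[OF der_eq[OF d l, of "y1+y2"] der_eq[OF d l, of y1] der_eq[OF d l, of y2] s])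
qed

lemma der_cons: assumes d: "mult_lie_n_derivation n D" and l: "length (w # rest) = n - 1"
  shows "D (lie_poly x (w # rest)) = lie_poly (D x) (w # rest) + lie_poly x (D w # rest)
      + (\<Sum>i<length rest. lie_poly x (w # rest[i := D (rest ! i)]))"
proof -
  have "(\<Sum>i<length (w # rest). lie_poly x ((w # rest)[i := D ((w # rest) ! i)]))
     = lie_poly x ((w # rest)[0 := D ((w # rest) ! 0)]) + (\<Sum>i<length rest. lie_poly x ((w # rest)[Suc i := D ((w # rest) ! Suc i)]))"
    by (simp only: length_Cons sum.lessThan_Suc_shift)
  then show ?thesis using der_eq[OF d l, of x] by (simp add: add.assoc)
qed

lemma der_C1: assumes A: "alternative_ring TYPE('a::{ab_group_add,times})"
  and d: "mult_lie_n_derivation n (D::'a \<Rightarrow> 'a)" and l: "length (w # rest) = n - 1"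
  shows "D (lie_poly x ((w1 + w2) # rest)) - D (lie_poly x (w1 # rest)) - D (lie_poly x (w2 # rest))
       = lie_poly x (D (w1 + w2) # rest) - lie_poly x (D w1 # rest) - lie_poly x (D w2 # rest)"
proof -
  have l': "\<And>v. length (v # rest) = n - 1" using l by simp
  have s: "(\<Sum>i<length rest. lie_poly x ((w1 + w2) # rest[i := D (rest ! i)])) =
     (\<Sum>i<length rest. lie_poly x (w1 # rest[i := D (rest ! i)])) + (\<Sum>i<length rest. lie_poly x (w2 # rest[i := D (rest ! i)]))"
    by (simp add: lp_add2[OF A] sum.distrib)
  have e1: "lie_poly (D x) ((w1 + w2) # rest) = lie_poly (D x) (w1 # rest) + lie_poly (D x) (w2 # rest)"
    by (rule lp_add2[OF A])
  show ?thesis by (rule grp3b[OF der_cons[OF d l', of x "w1+w2"] der_cons[OF d l', of x w1] der_cons[OF d l', of x w2] s e1])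
qed

lemma mult_diff_r: assumes A: "alternative_ring TYPE('a::{ab_group_add,times})"
  shows "(x::'a) * (y - z) = x * y - x * z"
  by (simp only: diff_conv_add_uminus alt_dl[OF A] mult_minr[OF A])
lemma mult_diff_l: assumes A: "alternative_ring TYPE('a::{ab_group_add,times})"
  shows "((x::'a) - y) * z = x * z - y * z"
  by (simp only: diff_conv_add_uminus alt_dr[OF A] mult_minl[OF A])

lemma kill0: assumes A: "alternative_ring TYPE('a::{ab_group_add,times})"
  and d: "mult_lie_n_derivation n (D::'a \<Rightarrow> 'a)" and l: "length zs = n - 1"
  and k: "lie_poly y1 zs = 0 \<or> lie_poly y2 zs = 0"
  shows "lie_poly (D (y1 + y2)) zs = lie_poly (D y1) zs + lie_poly (D y2) zs"
proof -
  have D0: "D 0 = 0" by (rule der_D0[OF A d])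
  have "D (lie_poly (y1 + y2) zs) - D (lie_poly y1 zs) - D (lie_poly y2 zs) = 0"
    using k D0 by (auto simp: lp_add[OF A])
  then have "lie_poly (D (y1 + y2)) zs - lie_poly (D y1) zs - lie_poly (D y2) zs = 0"
    using der_C0[OF A d l, of y1 y2] by simp
  then show ?thesis by (simp add: algebra_simps)
qed

lemma kill1: assumes A: "alternative_ring TYPE('a::{ab_group_add,times})"
  and d: "mult_lie_n_derivation n (D::'a \<Rightarrow> 'a)" and l: "length (w # rest) = n - 1"
  and k: "lie_poly x (w1 # rest) = 0 \<or> lie_poly x (w2 # rest) = 0"
  shows "lie_poly x (D (w1 + w2) # rest) = lie_poly x (D w1 # rest) + lie_poly x (D w2 # rest)"
proof -
  have D0: "D 0 = 0" by (rule der_D0[OF A d])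
  have "D (lie_poly x ((w1 + w2) # rest)) - D (lie_poly x (w1 # rest)) - D (lie_poly x (w2 # rest)) = 0"
    using k D0 by (auto simp: lp_add2[OF A])
  then have "lie_poly x (D (w1 + w2) # rest) - lie_poly x (D w1 # rest) - lie_poly x (D w2 # rest) = 0"
    using der_C1[OF A d l, of x w1 w2] by simp
  then show ?thesis by (simp add: algebra_simps)
qed

lemma main3: assumes A: "alternative_ring TYPE('a::{ab_group_add,times})"
  and d: "mult_lie_n_derivation n (D::'a \<Rightarrow> 'a)" and n: "n \<ge> 3"
  and ea: "(e::'a) * a = a" and ae: "a * e = 0" and be: "b * e = b" and eb: "e * b = 0"
  and E: "E = replicate (n - 2) e"
  shows "D (lie_poly e (a # E) + lie_poly b (e # E)) = D (lie_poly e (a # E)) + D (lie_poly b (e # E))"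
proof -
  have D0: "D 0 = 0" by (rule der_D0[OF A d])
  obtain E' where E': "E = e # E'" using n unfolding E
    by (metis Suc_diff_le Suc_leD diff_Suc_Suc numeral_2_eq_2 numeral_3_eq_3 replicate_Suc)
  have lz: "\<And>v. length (v # E) = n - 1" using n unfolding E by simp
  have z1: "lie_poly e (e # E) = 0"
    by (simp add: lp_cons lp_0[OF A] commutator_def)
  have cba: "commutator (commutator b a) e = 0"
    unfolding commutator_def mult_diff_l[OF A] mult_diff_r[OF A] cross_prods[OF A ea ae be eb] by simp
  have z2: "lie_poly b (a # E) = 0"
    unfolding E' by (simp add: lp_cons cba lp_0[OF A])
  have K1: "lie_poly (D (e + b)) (e # E) = lie_poly (D e) (e # E) + lie_poly (D b) (e # E)"
    using kill0[OF A d lz] z1 by blast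
  have K2: "lie_poly (D (e + b)) (a # E) = lie_poly (D e) (a # E) + lie_poly (D b) (a # E)"
    using kill0[OF A d lz] z2 by blast
  have S0: "lie_poly (D (e + b)) ((e + a) # E) = lie_poly (D e) ((e + a) # E) + lie_poly (D b) ((e + a) # E)"
    using K1 K2 by (simp add: lp_add2[OF A] algebra_simps)
  have C0: "D (lie_poly (e + b) ((e + a) # E)) = D (lie_poly e ((e + a) # E)) + D (lie_poly b ((e + a) # E))"
    using der_C0[OF A d lz[of "e + a"], of e b] S0 by (simp add: algebra_simps)
  have K3: "lie_poly e (D (e + a) # E) = lie_poly e (D e # E) + lie_poly e (D a # E)"
    using kill1[OF A d lz] z1 by blast
  have C1: "D (lie_poly e ((e + a) # E)) = D (lie_poly e (a # E))"
    using der_C1[OF A d lz, of e e a] K3 z1 D0 by (simp add: algebra_simps)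
  have K4: "lie_poly b (D (e + a) # E) = lie_poly b (D e # E) + lie_poly b (D a # E)"
    using kill1[OF A d lz] z2 by blast
  have C2: "D (lie_poly b ((e + a) # E)) = D (lie_poly b (e # E))"
    using der_C1[OF A d lz, of b e a] K4 z2 D0 by (simp add: algebra_simps)
  have V: "lie_poly (e + b) ((e + a) # E) = lie_poly e (a # E) + lie_poly b (e # E)"
    using z1 z2 by (simp add: lp_add[OF A] lp_add2[OF A])
  show ?thesis using C0 C1 C2 V by simp
qed

lemma lp_rep_a: assumes A: "alternative_ring TYPE('a::{ab_group_add,times})"
  shows "(e::'a) * a = a \<Longrightarrow> a * e = 0 \<Longrightarrow> lie_poly a (replicate k e) = (if even k then a else - a)"
proof (induction k arbitrary: a)
  case 0 then show ?case by (simp add: lp_nil)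
next
  case (Suc k)
  have c: "commutator a e = - a" unfolding commutator_def using Suc.prems by simp
  have "e * (- a) = - a" "(- a) * e = 0" using Suc.prems mult_minr[OF A] mult_minl[OF A] by simp_all
  then have "lie_poly (- a) (replicate k e) = (if even k then - a else a)" using Suc.IH by simp
  then show ?case by (simp add: lp_cons c)
qed

lemma lp_rep_b: "(b::'a::{ab_group_add,times}) * e = b \<Longrightarrow> e * b = 0 \<Longrightarrow> lie_poly b (replicate k e) = b"
proof (induction k)
  case 0 then show ?case by (simp add: lp_nil)
next
  case (Suc k)
  have c: "commutator b e = b" unfolding commutator_def using Suc.prems by simp
  then show ?case using Suc by (simp add: lp_cons)
qed

lemma lift23: assumes A: "alternative_ring TYPE('a::{ab_group_add,times})"
  and d: "mult_lie_n_derivation 2 (D::'a \<Rightarrow> 'a)"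
  shows "mult_lie_n_derivation 3 D"
proof -
  have d2: "D (commutator x y) = commutator (D x) y + commutator x (D y)" for x y
    using der_eq[OF d, of "[y]" x] by (simp add: lp_cons lp_nil)
  show ?thesis unfolding mult_lie_n_derivation_def
  proof (intro conjI allI impI)
    fix x and ys :: "'a list" assume l: "length ys = 3 - 1"
    then obtain y z where ys: "ys = [y, z]"
      by (metis (no_types, lifting) One_nat_def Suc_1 diff_Suc_1 length_0_conv length_Suc_conv numeral_3_eq_3)
    show "D (lie_poly x ys) = lie_poly (D x) ys + (\<Sum>i<length ys. lie_poly x (ys[i := D (ys ! i)]))"
      unfolding ys by (simp add: lp_cons lp_nil d2 comm_add1[OF A] numeral_2_eq_2 add.assoc)
  qed simp
qed

theorem lemma2p3:
  fixes e1 :: "'a::{ab_group_add,times}" and D :: "'a \<Rightarrow> 'a"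
  assumes alt: "alternative_ring TYPE('a)"
    and idem: "nontrivial_idempotent e1"
    and cond1: "\<And>a11 a22. a11 \<in> peirce e1 1 1 \<Longrightarrow> a22 \<in> peirce e1 2 2 \<Longrightarrow>
                 (\<forall>x\<in>peirce e1 1 2. commutator (a11 + a22) x = 0) \<Longrightarrow> a11 + a22 \<in> center"
    and cond2: "\<And>a11 a22. a11 \<in> peirce e1 1 1 \<Longrightarrow> a22 \<in> peirce e1 2 2 \<Longrightarrow>
                 (\<forall>x\<in>peirce e1 2 1. commutator (a11 + a22) x = 0) \<Longrightarrow> a11 + a22 \<in> center"
    and der: "mult_lie_type_derivation D"
    and a: "a12 \<in> peirce e1 1 2"
    and b: "b21 \<in> peirce e1 2 1"
  shows "D (a12 + b21) = D a12 + D b21"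
proof -
  have ee: "e1 * e1 = e1" using idem unfolding nontrivial_idempotent_def by simp
  obtain m where m: "m \<ge> 3" and dm: "mult_lie_n_derivation m D"
  proof -
    obtain n where n: "n \<ge> 2" and dn: "mult_lie_n_derivation n D"
      using der unfolding mult_lie_type_derivation_def by blast
    show ?thesis
    proof (cases "n = 2")
      case True
      then show ?thesis using that[of 3] lift23[OF alt] dn by simp
    next
      case False
      then show ?thesis using that[of n] n dn by simp
    qed
  qed
  note pa = peirce12[OF alt ee a] and pb = peirce21[OF alt ee b]
  define a' where "a' = (if even (m - 2) then a12 else - a12)"
  have ea': "e1 * a' = a'" and ae': "a' * e1 = 0"
    unfolding a'_def using pa mult_minr[OF alt] mult_minl[OF alt] by auto
  define E where "E = replicate (m - 2) e1"
  have va: "lie_poly e1 (a' # E) = a12"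
  proof -
    have c: "commutator e1 a' = a'" unfolding commutator_def using ea' ae' by simp
    have "lie_poly e1 (a' # E) = lie_poly a' E" by (simp add: lp_cons c)
    also have "\<dots> = (if even (m - 2) then a' else - a')" unfolding E_def by (rule lp_rep_a[OF alt ea' ae'])
    also have "\<dots> = a12" unfolding a'_def by simp
    finally show ?thesis .
  qed
  have vb: "lie_poly b21 (e1 # E) = b21"
  proof -
    have "commutator b21 e1 = b21" unfolding commutator_def using pb by simp
    then show ?thesis unfolding E_def lp_cons using lp_rep_b[OF pb] by simp
  qed
  show ?thesis using main3[OF alt dm m ea' ae' pb E_def] va vb by simp
qed

end
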